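(* Let $G$ be a finite connected graph with $\operatorname{diam}(G)\ge 2\operatorname{rad}(G)-1$. Then for any diametral pair of vertices $x,y$ (i.e. $d(x,y)=\operatorname{diam}(G)$), the set $\{x,y\}$ is a minimum radius certificate of $G$. Furthermore, $\operatorname{rad}(G)=\lfloor\frac{d(x,y)+1}{2}\rfloor$.
   Context: $d$ shortest-path distance, $e(v)=\max_u d(v,u)$, $\operatorname{rad}(G)=\min_v e(v)$, $\operatorname{diam}(G)=\max_v e(v)$. A radius certificate is a set $L$ of vertices such that every vertex $u$ has some $z\in L$ with $d(u,z)\ge\operatorname{rad}(G)$; a minimum one is one of smallest cardinality. *)

theory Defs
  imports Main
begin

definition simple_graph :: "'a set \<Rightarrow> ('a \<Rightarrow> 'a \<Rightarrow> bool) \<Rightarrow> bool" where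
  "simple_graph V E \<longleftrightarrow> finite V \<and>
     (\<forall>u v. E u v \<longrightarrow> u \<in> V \<and> v \<in> V \<and> u \<noteq> v \<and> E v u)"

definition is_walk :: "'a set \<Rightarrow> ('a \<Rightarrow> 'a \<Rightarrow> bool) \<Rightarrow> 'a list \<Rightarrow> bool" where
  "is_walk V E p \<longleftrightarrow> p \<noteq> [] \<and> set p \<subseteq> V \<and> (\<forall>i. Suc i < length p \<longrightarrow> E (p ! i) (p ! Suc i))"

definition walk_between :: "'a set \<Rightarrow> ('a \<Rightarrow> 'a \<Rightarrow> bool) \<Rightarrow> 'a \<Rightarrow> 'a \<Rightarrow> 'a list \<Rightarrow> bool" where
  "walk_between V E u v p \<longleftrightarrow> is_walk V E p \<and> hd p = u \<and> last p = v"

definition connected_graph :: "'a set \<Rightarrow> ('a \<Rightarrow> 'a \<Rightarrow> bool) \<Rightarrow> bool" where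
  "connected_graph V E \<longleftrightarrow> simple_graph V E \<and> V \<noteq> {} \<and>
     (\<forall>u\<in>V. \<forall>v\<in>V. \<exists>p. walk_between V E u v p)"

definition dist :: "'a set \<Rightarrow> ('a \<Rightarrow> 'a \<Rightarrow> bool) \<Rightarrow> 'a \<Rightarrow> 'a \<Rightarrow> nat" where
  "dist V E u v = (LEAST n. \<exists>p. walk_between V E u v p \<and> length p = Suc n)"

definition ecc :: "'a set \<Rightarrow> ('a \<Rightarrow> 'a \<Rightarrow> bool) \<Rightarrow> 'a \<Rightarrow> nat" where
  "ecc V E v = Max ((\<lambda>u. dist V E v u) ` V)"

definition rad :: "'a set \<Rightarrow> ('a \<Rightarrow> 'a \<Rightarrow> bool) \<Rightarrow> nat" where
  "rad V E = Min (ecc V E ` V)"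

definition diam :: "'a set \<Rightarrow> ('a \<Rightarrow> 'a \<Rightarrow> bool) \<Rightarrow> nat" where
  "diam V E = Max (ecc V E ` V)"

definition radius_certificate :: "'a set \<Rightarrow> ('a \<Rightarrow> 'a \<Rightarrow> bool) \<Rightarrow> 'a set \<Rightarrow> bool" where
  "radius_certificate V E L \<longleftrightarrow> L \<subseteq> V \<and> (\<forall>u\<in>V. \<exists>z\<in>L. dist V E u z \<ge> rad V E)"

definition min_radius_certificate :: "'a set \<Rightarrow> ('a \<Rightarrow> 'a \<Rightarrow> bool) \<Rightarrow> 'a set \<Rightarrow> bool" where
  "min_radius_certificate V E L \<longleftrightarrow> radius_certificate V E L \<and>
     (\<forall>L'. radius_certificate V E L' \<longrightarrow> card L \<le> card L')"

end

theory Submission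
  imports Defs
begin

lemma walk_single: "is_walk V E [a] \<longleftrightarrow> a \<in> V"
  unfolding is_walk_def by auto

lemma walk_Cons2: "is_walk V E (a#b#p) \<longleftrightarrow> a \<in> V \<and> E a b \<and> is_walk V E (b#p)"
proof
  assume h: "is_walk V E (a#b#p)"
  have "\<forall>i. Suc i < length (b#p) \<longrightarrow> E ((b#p) ! i) ((b#p) ! Suc i)"
  proof (intro allI impI)
    fix i assume "Suc i < length (b#p)"
    then have "Suc (Suc i) < length (a#b#p)" by simp
    with h have "E ((a#b#p) ! Suc i) ((a#b#p) ! Suc (Suc i))" unfolding is_walk_def by blast
    then show "E ((b#p) ! i) ((b#p) ! Suc i)" by simp
  qed
  moreover have "E a b" using h unfolding is_walk_def by force
  ultimately show "a \<in> V \<and> E a b \<and> is_walk V E (b#p)" using h unfolding is_walk_def by auto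
next
  assume h: "a \<in> V \<and> E a b \<and> is_walk V E (b#p)"
  show "is_walk V E (a#b#p)" unfolding is_walk_def
  proof (intro conjI allI impI)
    show "set (a # b # p) \<subseteq> V" using h unfolding is_walk_def by auto
    fix i assume "Suc i < length (a#b#p)"
    then show "E ((a#b#p) ! i) ((a#b#p) ! Suc i)"
    proof (cases i)
      case 0 then show ?thesis using h by simp
    next
      case (Suc j)
      then have "Suc j < length (b#p)" using \<open>Suc i < length (a#b#p)\<close> by simp
      with h have "E ((b#p) ! j) ((b#p) ! Suc j)" unfolding is_walk_def by blast
      then show ?thesis using Suc by simp
    qed
  qed simp
qed

lemma walk_append: "is_walk V E p \<Longrightarrow> is_walk V E q \<Longrightarrow> E (last p) (hd q) \<Longrightarrow> is_walk V E (p@q)"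
proof (induction p)
  case Nil then show ?case by (simp add: is_walk_def)
next
  case (Cons a p')
  show ?case
  proof (cases p')
    case Nil
    obtain b q' where q: "q = b#q'" using Cons.prems(2) unfolding is_walk_def by (cases q) auto
    then show ?thesis using Cons.prems Nil by (simp add: walk_Cons2 walk_single)
  next
    case (Cons c p'')
    then have "is_walk V E p'" using Cons.prems(1) \<open>p' = c#p''\<close> walk_Cons2 by metis
    then have "is_walk V E (p'@q)" using Cons.IH Cons.prems \<open>p' = c#p''\<close> by simp
    then show ?thesis using Cons.prems(1) \<open>p' = c#p''\<close> by (simp add: walk_Cons2)
  qed
qed

lemma walk_rev:
  assumes sg: "simple_graph V E" shows "is_walk V E p \<Longrightarrow> is_walk V E (rev p)"
proof (induction p)
  case Nil then show ?case by (simp add: is_walk_def)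
next
  case (Cons a p)
  show ?case
  proof (cases p)
    case Nil then show ?thesis using Cons.prems by simp
  next
    case (Cons b p')
    then have w: "is_walk V E p" and e: "E a b" and av: "a \<in> V"
      using Cons.prems walk_Cons2 by metis+
    have "E b a" using e sg unfolding simple_graph_def by blast
    have "is_walk V E (rev p @ [a])"
      by (rule walk_append) (use Cons.IH w av \<open>E b a\<close> \<open>p = b#p'\<close> in \<open>auto simp: walk_single\<close>)
    then show ?thesis by simp
  qed
qed

lemma walk_concat:
  assumes "walk_between V E u v p" "walk_between V E v w q"
  shows "walk_between V E u w (p @ tl q) \<and> length (p @ tl q) = length p + length q - 1"
proof (cases "tl q")
  case Nil
  then have "q = [v]" using assms(2) unfolding walk_between_def is_walk_def
    by (cases q) auto
  then show ?thesis using assms Nil unfolding walk_between_def by auto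
next
  case (Cons b q')
  then have q: "q = v#b#q'" using assms(2) unfolding walk_between_def is_walk_def
    by (cases q) auto
  then have "E v b" "is_walk V E (b#q')" using assms(2) walk_Cons2 unfolding walk_between_def by metis+
  then have "is_walk V E (p @ tl q)"
    using assms(1) q walk_append[of V E p "b#q'"] unfolding walk_between_def by auto
  moreover have "p \<noteq> []" using assms(1) unfolding walk_between_def is_walk_def by auto
  ultimately show ?thesis using assms q unfolding walk_between_def by auto
qed

lemma dist_walk:
  assumes "connected_graph V E" "u \<in> V" "v \<in> V"
  shows "\<exists>p. walk_between V E u v p \<and> length p = Suc (dist V E u v)"
proof -
  obtain p where p: "walk_between V E u v p" using assms unfolding connected_graph_def by blast
  then have "p \<noteq> []" unfolding walk_between_def is_walk_def by auto
  then have "\<exists>n p. walk_between V E u v p \<and> length p = Suc n" using p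
    by (intro exI[of _ "length p - 1"] exI[of _ p]) auto
  then show ?thesis unfolding dist_def by (rule LeastI_ex)
qed

lemma dist_le:
  assumes "walk_between V E u v p" shows "dist V E u v \<le> length p - 1"
proof -
  have "p \<noteq> []" using assms unfolding walk_between_def is_walk_def by auto
  then have "\<exists>p'. walk_between V E u v p' \<and> length p' = Suc (length p - 1)" using assms by auto
  then show ?thesis unfolding dist_def by (rule Least_le)
qed

lemma dist_tri:
  assumes "connected_graph V E" "u \<in> V" "v \<in> V" "w \<in> V"
  shows "dist V E u w \<le> dist V E u v + dist V E v w"
proof -
  obtain p where p: "walk_between V E u v p" "length p = Suc (dist V E u v)" using dist_walk[OF assms(1,2,3)] by blast
  obtain q where q: "walk_between V E v w q" "length q = Suc (dist V E v w)" using dist_walk[OF assms(1,3,4)] by blast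
  show ?thesis using walk_concat[OF p(1) q(1)] dist_le[of V E u w "p @ tl q"] p(2) q(2) by simp
qed

lemma dist_sym:
  assumes "connected_graph V E" "u \<in> V" "v \<in> V"
  shows "dist V E u v = dist V E v u"
proof -
  have sg: "simple_graph V E" using assms unfolding connected_graph_def by auto
  have le: "dist V E b a \<le> dist V E a b" if ab: "a \<in> V" "b \<in> V" for a b
  proof -
    obtain p where p: "walk_between V E a b p" "length p = Suc (dist V E a b)" using dist_walk[OF assms(1) ab] by blast
    have "walk_between V E b a (rev p)" using p walk_rev[OF sg]
      unfolding walk_between_def by (auto simp: hd_rev last_rev)
    then show ?thesis using dist_le p(2) by fastforce
  qed
  show ?thesis using le assms by (meson le_antisym)
qed

theorem proposition10:
  fixes V :: "'a set" and E :: "'a \<Rightarrow> 'a \<Rightarrow> bool" and x y :: 'a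
  assumes "connected_graph V E"
    and "diam V E + 1 \<ge> 2 * rad V E"
    and "x \<in> V" and "y \<in> V"
    and "dist V E x y = diam V E"
  shows "min_radius_certificate V E {x, y} \<and> rad V E = (dist V E x y + 1) div 2"
proof -
  have cg: "connected_graph V E" by fact
  have fin: "finite V" and ne: "V \<noteq> {}" using assms(1) unfolding connected_graph_def simple_graph_def by auto
  have "rad V E \<in> ecc V E ` V" using Min_in[of "ecc V E ` V"] fin ne unfolding rad_def by auto
  then obtain c where c: "c \<in> V" "ecc V E c = rad V E" by auto
  have ecc_ge: "dist V E c u \<le> rad V E" if "u \<in> V" for u
    using c Max_ge[of "(\<lambda>u. dist V E c u) ` V"] fin that unfolding ecc_def by auto
  have D2r: "dist V E x y \<le> 2 * rad V E"
    using dist_tri[OF cg assms(3) c(1) assms(4)] dist_sym[OF cg assms(3) c(1)]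
      ecc_ge[OF assms(3)] ecc_ge[OF assms(4)] by linarith
  have sumge: "dist V E x y \<le> dist V E u x + dist V E u y" if "u \<in> V" for u
    using dist_tri[OF cg assms(3) that assms(4)] dist_sym[OF cg assms(3) that] by linarith
  have radeq: "rad V E = (dist V E x y + 1) div 2" using D2r assms(2,5) by linarith
  have cert: "radius_certificate V E {x, y}"
    unfolding radius_certificate_def
  proof (intro conjI ballI)
    show "{x, y} \<subseteq> V" using assms by auto
    fix u assume "u \<in> V"
    from sumge[OF this] assms(2,5)
    have "dist V E u x \<ge> rad V E \<or> dist V E u y \<ge> rad V E" by linarith
    then show "\<exists>z\<in>{x, y}. rad V E \<le> dist V E u z" by auto
  qed
  have minimal: "card {x, y} \<le> card L'" if L': "radius_certificate V E L'" for L'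
  proof -
    have sub: "L' \<subseteq> V" using L' unfolding radius_certificate_def by auto
    then have finL: "finite L'" using fin finite_subset by auto
    obtain v where "v \<in> V" using ne by auto
    then obtain z where z: "z \<in> L'" using L' unfolding radius_certificate_def by auto
    then have c1: "card L' \<ge> 1" using finL by (metis One_nat_def Suc_leI card_gt_0_iff empty_iff)
    show ?thesis
    proof (cases "x = y")
      case True then show ?thesis using c1 by simp
    next
      case False
      have "dist V E x y \<noteq> 0"
      proof
        assume "dist V E x y = 0"
        then obtain p where p: "walk_between V E x y p" "length p = 1"
          using dist_walk[OF cg assms(3,4)] by auto
        then show False using False unfolding walk_between_def
          by (cases p) auto
      qed
      then have rpos: "rad V E \<noteq> 0" using D2r by linarith
      have "card L' \<ge> 2"
      proof (rule ccontr)
        assume "\<not> card L' \<ge> 2"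
        then have "card L' = 1" using c1 by linarith
        then obtain w where "L' = {w}" using card_1_singletonE by blast
        moreover have "w \<in> V" using sub \<open>L' = {w}\<close> by auto
        ultimately have "dist V E w w \<ge> rad V E" using L' unfolding radius_certificate_def by auto
        moreover have "dist V E w w = 0"
          using dist_le[of V E w w "[w]"] \<open>w \<in> V\<close> unfolding walk_between_def is_walk_def by auto
        ultimately show False using rpos by simp
      qed
      then show ?thesis using False by simp
    qed
  qed
  show ?thesis using cert minimal radeq unfolding min_radius_certificate_def by blast
qed

end
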